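(* Fix $0<\delta<1$, let $\epsilon=\frac12+\frac\delta2$, $\epsilon'=\frac12$, $c=\frac8\delta$, and let $k_n=\lceil 2^{\sqrt n}\rceil$. For all sufficiently large even $n$ there exists a subset $\mathcal M_n\subseteq\mathcal G_n$ with $|\mathcal M_n|\le k_n$ such that there is no graph $U$ with at most $2^{n^{\frac12-\delta}}$ vertices containing every graph of $\mathcal M_n$ as an induced subgraph.
   Context: For even $n$, a good graph on $n$ vertices is a bipartite graph with vertex set $[n]$ and parts $\{1,\dots,\frac n2\}$ and $\{\frac n2+1,\dots,n\}$, having exactly $\lfloor(\frac n2)^{2-\epsilon}\rfloor$ edges, such that every induced subgraph with at most $(\frac n2)^{\epsilon'}$ vertices has a vertex of degree less than $c$ (within that subgraph). $\mathcal G_n$ denotes the set of good graphs on $n$ vertices. A graph $F$ is contained in $U$ as an induced subgraph if there is an injection $\pi:V(F)\to V(U)$ with $xy\in E(F)\iff\pi(x)\pi(y)\in E(U)$. *)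

theory Defs
  imports Complex_Main
begin

text \<open>A graph on vertex set [n] = {1..n} is given by its edge set, a set of 2-element sets.\<close>

definition bip_edges :: "nat \<Rightarrow> nat set set" where
  "bip_edges n = {{u, v} | u v. u \<in> {1..n div 2} \<and> v \<in> {n div 2 + 1..n}}"

definition good_graph :: "real \<Rightarrow> real \<Rightarrow> real \<Rightarrow> nat \<Rightarrow> nat set set \<Rightarrow> bool" where
  "good_graph eps eps' c n E \<longleftrightarrow>
     E \<subseteq> bip_edges n \<and>
     int (card E) = \<lfloor>(real n / 2) powr (2 - eps)\<rfloor> \<and>
     (\<forall>S \<subseteq> {1..n}. S \<noteq> {} \<and> real (card S) \<le> (real n / 2) powr eps' \<longrightarrow>
        (\<exists>v\<in>S. real (card {u\<in>S. {u, v} \<in> E}) < c))"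

definition good_graphs :: "real \<Rightarrow> real \<Rightarrow> real \<Rightarrow> nat \<Rightarrow> nat set set set" where
  "good_graphs eps eps' c n = {E. good_graph eps eps' c n E}"

definition simple_graph :: "nat set \<Rightarrow> nat set set \<Rightarrow> bool" where
  "simple_graph V EU \<longleftrightarrow> finite V \<and> EU \<subseteq> {{x, y} | x y. x \<in> V \<and> y \<in> V \<and> x \<noteq> y}"

definition induced_sub :: "nat \<Rightarrow> nat set set \<Rightarrow> nat set \<Rightarrow> nat set set \<Rightarrow> bool" where
  "induced_sub n E V EU \<longleftrightarrow>
     (\<exists>\<pi>. inj_on \<pi> {1..n} \<and> \<pi> ` {1..n} \<subseteq> V \<and>
        (\<forall>x\<in>{1..n}. \<forall>y\<in>{1..n}. x \<noteq> y \<longrightarrow> ({x, y} \<in> E \<longleftrightarrow> {\<pi> x, \<pi> y} \<in> EU)))"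

end

theory Submission
  imports Defs "HOL-Library.FuncSet"
begin


lemma binom_ratio:
  "f \<le> e \<Longrightarrow> e \<le> N \<Longrightarrow> ((N - f) choose (e - f)) * N^f \<le> e^f * (N choose e)"
proof (induction f arbitrary: N e)
  case 0 thus ?case by simp
next
  case (Suc f)
  obtain N' e' where NE: "N = Suc N'" "e = Suc e'" using Suc.prems
    by (metis Suc_le_D le_trans)
  have f: "f \<le> e'" "e' \<le> N'" using Suc.prems NE by auto
  have IH: "((N' - f) choose (e' - f)) * N'^f \<le> e'^f * (N' choose e')"
    using Suc.IH f by blast
  have key: "N * (N' choose e') = (N choose e) * e" using Suc_times_binomial_eq[of N' e'] NE by simp
  have le: "e' * N \<le> e * N'" using f NE by (simp add: algebra_simps)
  show ?case
  proof (cases "N' = 0")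
    case True thus ?thesis using f NE by simp
  next
    case False
    have "e'^f * N^f \<le> e^f * N'^f"
      using power_mono[OF le, of f] by (simp add: power_mult_distrib mult.commute)
    have A: "((N' - f) choose (e' - f)) * N^f * N'^f \<le> e^f * N'^f * (N' choose e')"
    proof -
      have "((N' - f) choose (e' - f)) * N^f * N'^f = ((N' - f) choose (e' - f)) * N'^f * N^f"
        by (simp add: algebra_simps)
      also have "\<dots> \<le> e'^f * (N' choose e') * N^f" using IH by (intro mult_right_mono) auto
      also have "\<dots> = (e'^f * N^f) * (N' choose e')" by (simp add: algebra_simps)
      also have "\<dots> \<le> (e^f * N'^f) * (N' choose e')"
        using \<open>e'^f * N^f \<le> e^f * N'^f\<close> by (intro mult_right_mono) auto
      finally show ?thesis by (simp add: algebra_simps)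
    qed
    have B: "((N' - f) choose (e' - f)) * N^f \<le> e^f * (N' choose e')"
      using A False by (metis (no_types, lifting) mult.commute mult.left_commute mult_le_cancel2 zero_less_power gr0I)
    have "((N - Suc f) choose (e - Suc f)) * N^(Suc f) = (((N' - f) choose (e' - f)) * N^f) * N"
      using NE by (simp add: algebra_simps)
    also have "\<dots> \<le> (e^f * (N' choose e')) * N" using B by (intro mult_right_mono) auto
    also have "\<dots> = e^f * (N * (N' choose e'))" by (simp add: algebra_simps)
    also have "\<dots> = e^(Suc f) * (N choose e)" using key by (simp add: algebra_simps)
    finally show ?thesis .
  qed
qed


lemma contain_count:
  assumes "finite P" "card F = f" "finite F"
  shows "card {E. E \<subseteq> P \<and> card E = e \<and> F \<subseteq> E} * card P ^ f \<le> e^f * (card P choose e)"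
proof (cases "F \<subseteq> P \<and> f \<le> e \<and> e \<le> card P")
  case False
  have "{E. E \<subseteq> P \<and> card E = e \<and> F \<subseteq> E} = {}"
  proof (rule ccontr)
    assume "\<not> ?thesis"
    then obtain E where E: "E \<subseteq> P" "card E = e" "F \<subseteq> E" by auto
    have "card F \<le> card E" using E assms by (meson card_mono finite_subset)
    moreover have "card E \<le> card P" using E assms card_mono by blast
    ultimately show False using False E assms by auto
  qed
  thus ?thesis by (simp only: card.empty)
next
  case True
  let ?A = "{E. E \<subseteq> P \<and> card E = e \<and> F \<subseteq> E}"
  let ?B = "{D. D \<subseteq> P - F \<and> card D = e - f}"
  have "card ?A \<le> card ?B"
  proof (rule card_inj_on_le[where f="\<lambda>E. E - F"])
    show "inj_on (\<lambda>E. E - F) ?A" by (auto simp: inj_on_def)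
    show "(\<lambda>E. E - F) ` ?A \<subseteq> ?B"
    proof clarify
      fix E assume E: "E \<subseteq> P" "F \<subseteq> E"
      have "card (E - F) = card E - card F"
        using E assms by (meson card_Diff_subset finite_subset)
      thus "E - F \<subseteq> P - F \<and> card (E - F) = card E - f" using E assms by auto
    qed
    show "finite ?B" using assms by simp
  qed
  also have "card ?B = (card P - f) choose (e - f)"
    using True assms by (simp add: n_subsets card_Diff_subset)
  finally have "card ?A * card P ^ f \<le> ((card P - f) choose (e - f)) * card P ^ f" by simp
  also have "\<dots> \<le> e^f * (card P choose e)" using binom_ratio True by blast
  finally show ?thesis .
qed


lemma bip_eq: "bip_edges (2*m) = (\<lambda>(u,v). {u,v}) ` ({1..m} \<times> {m+1..2*m})"
  unfolding bip_edges_def by (auto simp: image_iff) (metis (no_types, lifting) case_prod_conv)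

lemma bip_finite: "finite (bip_edges (2*m))"
  unfolding bip_eq by simp

lemma card_bip: "card (bip_edges (2*m)) = m*m"
proof -
  have "inj_on (\<lambda>(u,v). {u::nat,v}) ({1..m} \<times> {m+1..2*m})"
    by (auto simp: inj_on_def doubleton_eq_iff)
  thus ?thesis unfolding bip_eq by (simp add: card_image)
qed

lemma bip_mem: "e \<in> bip_edges (2*m) \<Longrightarrow> \<exists>u v. e = {u,v} \<and> u \<in> {1..m} \<and> v \<in> {m+1..2*m}"
  unfolding bip_eq by (auto simp: image_iff) blast

lemma witness_abs:
  fixes R :: "nat \<Rightarrow> nat \<Rightarrow> bool"
  assumes "finite X" "finite Y" "\<forall>v\<in>X. c' \<le> card {u\<in>Y. R v u}"
  shows "\<exists>x z w. x \<in> {0..<card X} \<rightarrow>\<^sub>E X \<and> z \<in> {0..<card Y} \<rightarrow>\<^sub>E Y \<and>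
     w \<in> ({0..<card X}\<times>{0..<c'}) \<rightarrow>\<^sub>E {0..<card Y} \<and> inj_on x {0..<card X} \<and>
     inj_on z {0..<card Y} \<and> (\<forall>i<card X. inj_on (\<lambda>j. w(i,j)) {0..<c'}) \<and>
     (\<forall>i<card X. \<forall>j<c'. R (x i) (z (w(i,j))))"
proof -
  obtain x0 where x0: "bij_betw x0 {0..<card X} X" using ex_bij_betw_nat_finite assms(1) by blast
  obtain z0 where z0: "bij_betw z0 {0..<card Y} Y" using ex_bij_betw_nat_finite assms(2) by blast
  have "\<forall>v\<in>X. \<exists>g. inj_on g {0..<c'} \<and> g ` {0..<c'} \<subseteq> {u\<in>Y. R v u}"
  proof
    fix v assume "v \<in> X"
    then obtain T where T: "T \<subseteq> {u\<in>Y. R v u}" "card T = c'" "finite T"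
      using assms(3) obtain_subset_with_card_n by metis
    obtain g where "bij_betw g {0..<card T} T" using ex_bij_betw_nat_finite T(3) by blast
    thus "\<exists>g. inj_on g {0..<c'} \<and> g ` {0..<c'} \<subseteq> {u\<in>Y. R v u}"
      using T by (auto simp: bij_betw_def)
  qed
  then obtain G where G: "\<forall>v\<in>X. inj_on (G v) {0..<c'} \<and> G v ` {0..<c'} \<subseteq> {u\<in>Y. R v u}"
    by metis
  define x where "x = restrict x0 {0..<card X}"
  define z where "z = restrict z0 {0..<card Y}"
  define w where "w = restrict (\<lambda>(i,j). the_inv_into {0..<card Y} z0 (G (x0 i) j)) ({0..<card X}\<times>{0..<c'})"
  have xX: "x0 i \<in> X" if "i < card X" for i using x0 that by (auto simp: bij_betw_def)
  have Gin0: "G v j \<in> Y \<and> R v (G v j)" if "v \<in> X" "j < c'" for v j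
  proof -
    have "G v j \<in> G v ` {0..<c'}" using that by simp
    thus ?thesis using G that(1) by blast
  qed
  have Gin: "G (x0 i) j \<in> Y" "R (x0 i) (G (x0 i) j)" if "i < card X" "j < c'" for i j
    using Gin0 xX[OF that(1)] that(2) by auto
  have zinv: "z0 (the_inv_into {0..<card Y} z0 y) = y" "the_inv_into {0..<card Y} z0 y \<in> {0..<card Y}"
    if "y \<in> Y" for y
  proof -
    have "y \<in> z0 ` {0..<card Y}" using z0 that by (simp add: bij_betw_def)
    thus "z0 (the_inv_into {0..<card Y} z0 y) = y" "the_inv_into {0..<card Y} z0 y \<in> {0..<card Y}"
      using z0 that the_inv_into_into[of z0 "{0..<card Y}" y "{0..<card Y}"]
      by (auto simp: bij_betw_def f_the_inv_into_f)
  qed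
  show ?thesis
  proof (intro exI conjI allI impI)
    show "x \<in> {0..<card X} \<rightarrow>\<^sub>E X" using xX by (auto simp: x_def)
    show "z \<in> {0..<card Y} \<rightarrow>\<^sub>E Y" using z0 by (auto simp: z_def bij_betw_def)
    show "w \<in> ({0..<card X}\<times>{0..<c'}) \<rightarrow>\<^sub>E {0..<card Y}"
      using zinv Gin by (auto simp: w_def)
    show "inj_on x {0..<card X}" using x0 by (auto simp: x_def bij_betw_def inj_on_def)
    show "inj_on z {0..<card Y}" using z0 by (auto simp: z_def bij_betw_def inj_on_def)
  next
    fix i assume i: "i < card X"
    show "inj_on (\<lambda>j. w(i,j)) {0..<c'}"
    proof (rule inj_onI)
      fix j j' assume jj: "j \<in> {0..<c'}" "j' \<in> {0..<c'}" "w(i,j) = w(i,j')"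
      hence "z0 (the_inv_into {0..<card Y} z0 (G (x0 i) j)) = z0 (the_inv_into {0..<card Y} z0 (G (x0 i) j'))" using i jj by (simp add: w_def)
      hence "G (x0 i) j = G (x0 i) j'" using jj i zinv Gin by (metis atLeastLessThan_iff)
      thus "j = j'" using G xX[OF i] jj by (auto simp: inj_on_def)
    qed
  next
    fix i j assume i: "i < card X" and j: "j < c'"
    show "R (x i) (z (w(i,j)))" using i j zinv Gin by (simp add: x_def z_def w_def)
  qed
qed



type_synonym trip = "(nat\<Rightarrow>nat)\<times>(nat\<Rightarrow>nat)\<times>(nat\<times>nat\<Rightarrow>nat)"

definition Trip :: "nat \<Rightarrow> nat \<Rightarrow> nat \<Rightarrow> nat \<Rightarrow> trip set" where
"Trip m c' a b = {(x,z,w). x \<in> {0..<a} \<rightarrow>\<^sub>E {1..2*m} \<and> z \<in> {0..<b} \<rightarrow>\<^sub>E {1..2*m} \<and>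
   w \<in> ({0..<a}\<times>{0..<c'}) \<rightarrow>\<^sub>E {0..<b} \<and> inj_on x {0..<a} \<and> inj_on z {0..<b} \<and>
   x`{0..<a} \<inter> z`{0..<b} = {} \<and> (\<forall>i<a. inj_on (\<lambda>j. w(i,j)) {0..<c'})}"

definition Fs :: "nat \<Rightarrow> nat \<Rightarrow> trip \<Rightarrow> nat set set" where
"Fs c' a t = (case t of (x,z,w) \<Rightarrow> (\<lambda>(i,j). {x i, z (w(i,j))}) ` ({0..<a}\<times>{0..<c'}))"

lemma Trip_sub: "Trip m c' a b \<subseteq> ({0..<a} \<rightarrow>\<^sub>E {1..2*m}) \<times> ({0..<b} \<rightarrow>\<^sub>E {1..2*m}) \<times> (({0..<a}\<times>{0..<c'}) \<rightarrow>\<^sub>E {0..<b})"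
  unfolding Trip_def by auto

lemma finite_Trip: "finite (Trip m c' a b)"
  by (rule finite_subset[OF Trip_sub]) (auto intro!: finite_PiE)

lemma card_Trip: "card (Trip m c' a b) \<le> (2*m)^a * (2*m)^b * b^(a*c')"
proof -
  have "card (Trip m c' a b) \<le> card (({0..<a} \<rightarrow>\<^sub>E {1..2*m}) \<times> ({0..<b} \<rightarrow>\<^sub>E {1..2*m}) \<times> (({0..<a}\<times>{0..<c'}) \<rightarrow>\<^sub>E {0..<b}))"
    by (rule card_mono[OF _ Trip_sub]) (auto intro!: finite_PiE)
  also have "\<dots> = (2*m)^a * (2*m)^b * b^(a*c')"
    by (simp add: card_cartesian_product card_PiE)
  finally show ?thesis .
qed

lemma card_Fs: assumes "t \<in> Trip m c' a b" shows "card (Fs c' a t) = a*c'"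
proof -
  obtain x z w where t: "t = (x,z,w)" by (cases t) auto
  have T1: "w \<in> ({0..<a}\<times>{0..<c'}) \<rightarrow>\<^sub>E {0..<b}" and T2: "inj_on x {0..<a}" and T3: "inj_on z {0..<b}"
    and T4: "x`{0..<a} \<inter> z`{0..<b} = {}" and T5: "\<forall>i<a. inj_on (\<lambda>j. w(i,j)) {0..<c'}"
    using assms unfolding t Trip_def by auto
  have "inj_on (\<lambda>(i,j). {x i, z (w(i,j))}) ({0..<a}\<times>{0..<c'})"
  proof (rule inj_onI, clarify)
    fix i j i' j' assume ij: "i \<in> {0..<a}" "j \<in> {0..<c'}" "i' \<in> {0..<a}" "j' \<in> {0..<c'}"
      and eq: "{x i, z (w(i,j))} = {x i', z (w(i',j'))}"
    have wi: "w(i,j) \<in> {0..<b}" "w(i',j') \<in> {0..<b}" using T1 ij by (auto simp: PiE_iff)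
    have d1: "x i \<noteq> z (w(i',j'))"
    proof
      assume "x i = z (w(i',j'))"
      hence "x i \<in> x`{0..<a} \<inter> z`{0..<b}" using ij(1) wi(2) by (metis IntI image_eqI)
      thus False using T4 by simp
    qed
    have d2: "x i' \<noteq> z (w(i,j))"
    proof
      assume "x i' = z (w(i,j))"
      hence "x i' \<in> x`{0..<a} \<inter> z`{0..<b}" using ij(3) wi(1) by (metis IntI image_eqI)
      thus False using T4 by simp
    qed
    have xx: "x i = x i'" and zz: "z (w(i,j)) = z (w(i',j'))"
      using eq d1 d2 unfolding doubleton_eq_iff by auto
    have ii: "i = i'" using inj_onD[OF T2 xx] ij by simp
    have "w(i,j) = w(i',j')" using inj_onD[OF T3 zz] wi by simp
    hence "w(i,j) = w(i,j')" using ii by simp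
    hence "j = j'" using inj_onD[OF T5[rule_format, of i]] ij by simp
    thus "i = i' \<and> j = j'" using ii by simp
  qed
  thus ?thesis unfolding t Fs_def by (simp add: card_image card_cartesian_product)
qed

lemma finite_Fs: "finite (Fs c' a t)"
  unfolding Fs_def by (cases t) auto

lemma bad_witness_aux:
  assumes "finite X" "finite Y" "X \<inter> Y = {}" "X \<subseteq> {1..2*m}" "Y \<subseteq> {1..2*m}"
    "card Y \<le> card X" "1 \<le> card X" "card X \<le> s0"
    "\<forall>v\<in>X. c' \<le> card {u\<in>Y. {u,v} \<in> E}"
  shows "\<exists>a b t. a \<in> {1..s0} \<and> b \<in> {0..a} \<and> t \<in> Trip m c' a b \<and> Fs c' a t \<subseteq> E"
proof -
  obtain x z w where W: "x \<in> {0..<card X} \<rightarrow>\<^sub>E X" "z \<in> {0..<card Y} \<rightarrow>\<^sub>E Y"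
     "w \<in> ({0..<card X}\<times>{0..<c'}) \<rightarrow>\<^sub>E {0..<card Y}" "inj_on x {0..<card X}"
     "inj_on z {0..<card Y}" "\<forall>i<card X. inj_on (\<lambda>j. w(i,j)) {0..<c'}"
     "\<forall>i<card X. \<forall>j<c'. {z (w(i,j)), x i} \<in> E"
    using witness_abs[of X Y c' "\<lambda>v u. {u,v} \<in> E"] assms by blast
  have "(x,z,w) \<in> Trip m c' (card X) (card Y)"
    unfolding Trip_def using W assms(3,4,5) by (auto simp: PiE_iff)
  moreover have "Fs c' (card X) (x,z,w) \<subseteq> E"
    unfolding Fs_def using W(7) by (auto simp: insert_commute)
  ultimately show ?thesis using assms by auto
qed

lemma bad_witness:
  assumes "E \<subseteq> bip_edges (2*m)" "S \<subseteq> {1..2*m}" "S \<noteq> {}" "card S \<le> s0"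
    "\<forall>v\<in>S. c' \<le> card {u\<in>S. {u,v} \<in> E}"
  shows "\<exists>a b t. a \<in> {1..s0} \<and> b \<in> {0..a} \<and> t \<in> Trip m c' a b \<and> Fs c' a t \<subseteq> E"
proof -
  define SA where "SA = S \<inter> {1..m}"
  define SB where "SB = S \<inter> {m+1..2*m}"
  have fin: "finite S" using assms(2) finite_subset by blast
  have SU: "S = SA \<union> SB" "SA \<inter> SB = {}" using assms(2) by (auto simp: SA_def SB_def)
  have finAB: "finite SA" "finite SB" using fin SU by auto
  have cS: "card S = card SA + card SB" using SU finAB card_Un_disjoint by metis
  have nA: "{u\<in>S. {u,v} \<in> E} = {u\<in>SB. {u,v} \<in> E}" if "v \<in> SA" for v
  proof -
    have "u \<in> SB" if "u \<in> S" "{u,v} \<in> E" for u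
    proof -
      obtain p q where "{u,v} = {p,q}" "p \<in> {1..m}" "q \<in> {m+1..2*m}"
        using bip_mem assms(1) \<open>{u,v} \<in> E\<close> by blast
      thus ?thesis using \<open>v \<in> SA\<close> that(1) by (auto simp: SA_def SB_def doubleton_eq_iff)
    qed
    thus ?thesis using SU by auto
  qed
  have nB: "{u\<in>S. {u,v} \<in> E} = {u\<in>SA. {u,v} \<in> E}" if "v \<in> SB" for v
  proof -
    have "u \<in> SA" if "u \<in> S" "{u,v} \<in> E" for u
    proof -
      obtain p q where "{u,v} = {p,q}" "p \<in> {1..m}" "q \<in> {m+1..2*m}"
        using bip_mem assms(1) \<open>{u,v} \<in> E\<close> by blast
      thus ?thesis using \<open>v \<in> SB\<close> that(1) by (auto simp: SA_def SB_def doubleton_eq_iff)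
    qed
    thus ?thesis using SU by auto
  qed
  have ne: "card S \<ge> 1" using assms(3) fin by (simp add: Suc_leI card_gt_0_iff)
  have sub: "SA \<subseteq> {1..2*m}" "SB \<subseteq> {1..2*m}" using SU assms(2) by auto
  have dA: "\<forall>v\<in>SA. c' \<le> card {u\<in>SB. {u,v} \<in> E}"
  proof
    fix v assume v: "v \<in> SA"
    hence "v \<in> S" using SU by blast
    thus "c' \<le> card {u\<in>SB. {u,v} \<in> E}" using bspec[OF assms(5) \<open>v \<in> S\<close>] nA[OF v] by (simp only:)
  qed
  have dB: "\<forall>v\<in>SB. c' \<le> card {u\<in>SA. {u,v} \<in> E}"
  proof
    fix v assume v: "v \<in> SB"
    hence "v \<in> S" using SU by blast
    thus "c' \<le> card {u\<in>SA. {u,v} \<in> E}" using bspec[OF assms(5) \<open>v \<in> S\<close>] nB[OF v] by (simp only:)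
  qed
  have dis: "SB \<inter> SA = {}" using SU by auto
  show ?thesis
  proof (cases "card SB \<le> card SA")
    case True
    have "1 \<le> card SA" "card SA \<le> s0" using True cS ne assms(4) by linarith+
    thus ?thesis using bad_witness_aux[OF finAB(1) finAB(2) SU(2) sub True _ _ dA] by blast
  next
    case False
    have "1 \<le> card SB" "card SB \<le> s0" "card SA \<le> card SB" using False cS ne assms(4) by linarith+
    thus ?thesis using bad_witness_aux[OF finAB(2) finAB(1) dis sub(2) sub(1) _ _ _ dB] by blast
  qed
qed



definition BadS :: "nat \<Rightarrow> nat \<Rightarrow> nat \<Rightarrow> nat \<Rightarrow> nat set set set" where
"BadS m e c' s0 = {E. E \<subseteq> bip_edges (2*m) \<and> card E = e \<and>
   (\<exists>S\<subseteq>{1..2*m}. S \<noteq> {} \<and> card S \<le> s0 \<and> (\<forall>v\<in>S. c' \<le> card {u\<in>S. {u,v} \<in> E}))}"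

lemma term_bound:
  fixes m e c' s0 a b :: nat
  assumes m: "m \<ge> 16" and q: "(real s0 * real e / real (m*m))^c' \<le> 1 / real m^4"
    and a: "1 \<le> a" "a \<le> s0" and b: "b \<le> a"
  shows "real (card (Trip m c' a b)) * (real e^(a*c') / real (m*m)^(a*c')) \<le> 4 / real m^2"
proof -
  have mpos: "real m > 0" using m by simp
  have "real (card (Trip m c' a b)) \<le> real ((2*m)^a * (2*m)^b * b^(a*c'))"
    using card_Trip by (simp only: of_nat_le_iff)
  also have "\<dots> \<le> real ((2*m)^a * (2*m)^a * s0^(a*c'))"
    by (simp only: of_nat_le_iff) (intro mult_mono power_increasing power_mono; use a b m in auto)
  finally have ct: "real (card (Trip m c' a b)) \<le> (2*real m)^a * (2*real m)^a * real s0^(a*c')" by simp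
  have four: "(2::real)^a * 2^a = 4^a" by (simp flip: power_mult_distrib)
  have nn: "0 \<le> real e^(a*c') / real (m*m)^(a*c')" by simp
  have "real (card (Trip m c' a b)) * (real e^(a*c') / real (m*m)^(a*c'))
      \<le> (2*real m)^a * (2*real m)^a * real s0^(a*c') * (real e^(a*c') / real (m*m)^(a*c'))"
    by (rule mult_right_mono[OF ct nn])
  also have "\<dots> = (4*real m^2)^a * ((real s0 * real e / real (m*m))^c')^a"
    by (simp add: four power_mult_distrib power_divide power_mult[symmetric] mult.commute[of c' a] power2_eq_square
        flip: power_mult)
  also have "\<dots> \<le> (4*real m^2)^a * (1 / real m^4)^a"
    by (intro mult_left_mono power_mono q) auto
  also have "\<dots> = (4 / real m^2)^a"
  proof -
    have "4*real m^2 * (1 / real m^4) = 4 / real m^2"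
      using mpos by (simp add: field_simps power2_eq_square power4_eq_xxxx)
    thus ?thesis by (metis power_mult_distrib)
  qed
  also have "\<dots> \<le> (4 / real m^2)^1"
  proof (rule power_decreasing)
    have "16 * 16 \<le> real m * real m" using m mult_mono[of 16 "real m" 16 "real m"] by simp
    thus "4 / real m^2 \<le> 1" using mpos by (simp add: power2_eq_square field_simps)
  qed (use a in auto)
  finally show ?thesis by simp
qed

lemma bad_count:
  fixes m e c' s0 :: nat
  assumes m: "m \<ge> 16" and q: "(real s0 * real e / real (m*m))^c' \<le> 1 / real m^4"
    and s0: "s0 * s0 \<le> m"
  shows "real (card (BadS m e c' s0)) \<le> real (m*m choose e) / 2"
proof -
  define P where "P = bip_edges (2*m)"
  define C where "C = real (m*m choose e)"
  define Cont where "Cont a t = {E. E \<subseteq> P \<and> card E = e \<and> Fs c' a t \<subseteq> E}" for a t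
  have finP: "finite P" and cP: "card P = m*m" unfolding P_def by (auto simp: bip_finite card_bip)
  have finC: "finite (Cont a t)" for a t
    by (rule finite_subset[of _ "Pow P"]) (auto simp: Cont_def finP)
  have sub: "BadS m e c' s0 \<subseteq> (\<Union>a\<in>{1..s0}. \<Union>b\<in>{0..a}. \<Union>t\<in>Trip m c' a b. Cont a t)"
  proof
    fix E assume "E \<in> BadS m e c' s0"
    then obtain S where E: "E \<subseteq> P" "card E = e" "S \<subseteq> {1..2*m}" "S \<noteq> {}" "card S \<le> s0"
      "\<forall>v\<in>S. c' \<le> card {u\<in>S. {u,v} \<in> E}" unfolding BadS_def P_def by blast
    then obtain a b t where "a \<in> {1..s0}" "b \<in> {0..a}" "t \<in> Trip m c' a b" "Fs c' a t \<subseteq> E"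
      using bad_witness[of E m S s0 c'] unfolding P_def by blast
    thus "E \<in> (\<Union>a\<in>{1..s0}. \<Union>b\<in>{0..a}. \<Union>t\<in>Trip m c' a b. Cont a t)"
      using E unfolding Cont_def by blast
  qed
  have "card (BadS m e c' s0) \<le> card (\<Union>a\<in>{1..s0}. \<Union>b\<in>{0..a}. \<Union>t\<in>Trip m c' a b. Cont a t)"
    by (rule card_mono[OF _ sub]) (auto intro!: finite_UN_I finite_Trip finC)
  also have "\<dots> \<le> (\<Sum>a\<in>{1..s0}. card (\<Union>b\<in>{0..a}. \<Union>t\<in>Trip m c' a b. Cont a t))"
    by (rule card_UN_le) simp
  also have "\<dots> \<le> (\<Sum>a\<in>{1..s0}. \<Sum>b\<in>{0..a}. card (\<Union>t\<in>Trip m c' a b. Cont a t))"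
    by (intro sum_mono card_UN_le) simp
  also have "\<dots> \<le> (\<Sum>a\<in>{1..s0}. \<Sum>b\<in>{0..a}. \<Sum>t\<in>Trip m c' a b. card (Cont a t))"
    by (intro sum_mono card_UN_le finite_Trip)
  finally have c1: "real (card (BadS m e c' s0)) \<le> (\<Sum>a\<in>{1..s0}. \<Sum>b\<in>{0..a}. \<Sum>t\<in>Trip m c' a b. real (card (Cont a t)))"
    by (simp only: of_nat_sum[symmetric] of_nat_le_iff)
  have mpos: "real m > 0" using m by simp
  have cont: "real (card (Cont a t)) \<le> real e^(a*c') / real (m*m)^(a*c') * C"
    if "t \<in> Trip m c' a b" for a b t
  proof -
    have "card (Cont a t) * card P ^ (a*c') \<le> e^(a*c') * (card P choose e)"
      unfolding Cont_def using contain_count[OF finP card_Fs[OF that] finite_Fs] .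
    hence "real (card (Cont a t)) * real (m*m) ^ (a*c') \<le> real e^(a*c') * C"
      unfolding cP C_def by (metis of_nat_le_iff of_nat_mult of_nat_power)
    moreover have "real (m*m) ^ (a*c') > 0" using mpos by simp
    ultimately show ?thesis by (simp add: field_simps)
  qed
  have inner: "(\<Sum>t\<in>Trip m c' a b. real (card (Cont a t))) \<le> 4 / real m^2 * C"
    if "a \<in> {1..s0}" "b \<in> {0..a}" for a b
  proof -
    have "(\<Sum>t\<in>Trip m c' a b. real (card (Cont a t))) \<le> (\<Sum>t\<in>Trip m c' a b. real e^(a*c') / real (m*m)^(a*c') * C)"
      by (intro sum_mono cont)
    also have "\<dots> = real (card (Trip m c' a b)) * (real e^(a*c') / real (m*m)^(a*c')) * C" by simp
    also have "\<dots> \<le> 4 / real m^2 * C"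
      by (intro mult_right_mono term_bound[OF m q]) (use that in \<open>auto simp: C_def\<close>)
    finally show ?thesis .
  qed
  have "(\<Sum>a\<in>{1..s0}. \<Sum>b\<in>{0..a}. \<Sum>t\<in>Trip m c' a b. real (card (Cont a t)))
      \<le> (\<Sum>a\<in>{1..s0}. \<Sum>b\<in>{0..a}. 4 / real m^2 * C)"
    by (intro sum_mono inner) auto
  also have "\<dots> = (\<Sum>a\<in>{1..s0}. real (a+1) * (4 / real m^2 * C))" by simp
  also have "\<dots> \<le> (\<Sum>a\<in>{1..s0}. real (s0+1) * (4 / real m^2 * C))"
    by (intro sum_mono mult_right_mono) (auto simp: C_def)
  also have "\<dots> = real s0 * real (s0+1) * (4 / real m^2 * C)" by simp
  also have "\<dots> \<le> (2 * real m) * (4 / real m^2 * C)"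
  proof (intro mult_right_mono)
    have "s0 \<le> m" using s0 by (metis le_trans le_square)
    hence "s0 * (s0 + 1) \<le> 2 * m" using s0 by simp
    thus "real s0 * real (s0 + 1) \<le> 2 * real m" by (metis of_nat_le_iff of_nat_mult of_nat_numeral)
  qed (auto simp: C_def)
  also have "\<dots> = 8 / real m * C" using mpos by (simp add: power2_eq_square field_simps)
  also have "\<dots> \<le> 1/2 * C"
    by (intro mult_right_mono) (use m in \<open>auto simp: C_def field_simps\<close>)
  finally show ?thesis using c1 unfolding C_def by simp
qed



lemma good_of_notbad:
  fixes m :: nat and eps c :: real
  assumes "E \<subseteq> bip_edges (2*m)" "card E = nat \<lfloor>real m powr (2 - eps)\<rfloor>"
    "E \<notin> BadS m (nat \<lfloor>real m powr (2 - eps)\<rfloor>) (nat \<lceil>c\<rceil>) (nat \<lfloor>real m powr (1/2)\<rfloor>)"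
  shows "good_graph eps (1/2) c (2*m) E"
proof -
  have h: "real (2*m) / 2 = real m" by simp
  have "int (card E) = \<lfloor>real m powr (2 - eps)\<rfloor>" using assms(2) by simp
  moreover have "\<exists>v\<in>S. real (card {u\<in>S. {u, v} \<in> E}) < c"
    if S: "S \<subseteq> {1..2*m}" "S \<noteq> {}" "real (card S) \<le> real m powr (1/2)" for S
  proof -
    have "card S \<le> nat \<lfloor>real m powr (1/2)\<rfloor>" using S(3) by (simp add: le_nat_floor)
    then obtain v where v: "v \<in> S" "\<not> nat \<lceil>c\<rceil> \<le> card {u\<in>S. {u, v} \<in> E}"
      using assms S unfolding BadS_def by blast
    hence "int (card {u\<in>S. {u, v} \<in> E}) < \<lceil>c\<rceil>" by linarith
    hence "real (card {u\<in>S. {u, v} \<in> E}) < c" by (simp add: less_ceiling_iff)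
    thus ?thesis using v by blast
  qed
  ultimately show ?thesis using assms(1) unfolding good_graph_def h by blast
qed

lemma card_good_lower:
  fixes m :: nat and eps c :: real
  assumes m: "m \<ge> 16"
    and q: "(real (nat \<lfloor>real m powr (1/2)\<rfloor>) * real (nat \<lfloor>real m powr (2 - eps)\<rfloor>) / real (m*m))^(nat \<lceil>c\<rceil>) \<le> 1 / real m^4"
  shows "real (m*m choose nat \<lfloor>real m powr (2 - eps)\<rfloor>) / 2 \<le> real (card (good_graphs eps (1/2) c (2*m)))"
proof -
  define e where "e = nat \<lfloor>real m powr (2 - eps)\<rfloor>"
  define s0 where "s0 = nat \<lfloor>real m powr (1/2)\<rfloor>"
  define W where "W = {E. E \<subseteq> bip_edges (2*m) \<and> card E = e}"
  have s0: "s0 * s0 \<le> m"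
  proof -
    have "real s0 \<le> real m powr (1/2)" unfolding s0_def by simp
    hence "real s0 * real s0 \<le> real m powr (1/2) * real m powr (1/2)" by (intro mult_mono) auto
    also have "\<dots> = real m" by (simp flip: powr_add)
    finally show ?thesis by (metis of_nat_le_iff of_nat_mult)
  qed
  have finG: "finite (good_graphs eps (1/2) c (2*m))"
    by (rule finite_subset[of _ "Pow (bip_edges (2*m))"]) (auto simp: good_graphs_def good_graph_def bip_finite)
  have "W - BadS m e (nat \<lceil>c\<rceil>) s0 \<subseteq> good_graphs eps (1/2) c (2*m)"
    using good_of_notbad unfolding W_def e_def s0_def good_graphs_def by blast
  hence "card (W - BadS m e (nat \<lceil>c\<rceil>) s0) \<le> card (good_graphs eps (1/2) c (2*m))"
    using card_mono finG by blast
  moreover have "card W - card (BadS m e (nat \<lceil>c\<rceil>) s0) \<le> card (W - BadS m e (nat \<lceil>c\<rceil>) s0)"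
  proof (rule diff_card_le_card_Diff)
    show "finite (BadS m e (nat \<lceil>c\<rceil>) s0)"
      by (rule finite_subset[of _ "Pow (bip_edges (2*m))"]) (auto simp: BadS_def bip_finite)
  qed
  moreover have "card W = m*m choose e" unfolding W_def by (simp add: n_subsets bip_finite card_bip)
  moreover have "real (card (BadS m e (nat \<lceil>c\<rceil>) s0)) \<le> real (m*m choose e) / 2"
    by (rule bad_count[OF m _ s0]) (use q in \<open>simp add: e_def s0_def\<close>)
  ultimately show ?thesis unfolding e_def[symmetric] by linarith
qed

definition pull :: "nat \<Rightarrow> nat set set \<Rightarrow> (nat \<Rightarrow> nat) \<Rightarrow> nat set set" where
"pull n EU \<pi> = {{x,y}|x y. x\<in>{1..n} \<and> y\<in>{1..n} \<and> x\<noteq>y \<and> {\<pi> x, \<pi> y} \<in> EU}"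

lemma pull_eq:
  assumes "E \<subseteq> bip_edges (2*m)" "induced_sub (2*m) E {0..<L} EU"
  shows "\<exists>\<pi>\<in>{1..2*m} \<rightarrow>\<^sub>E {0..<L}. E = pull (2*m) EU \<pi>"
proof -
  obtain \<pi> where p: "inj_on \<pi> {1..2*m}" "\<pi> ` {1..2*m} \<subseteq> {0..<L}"
    "\<forall>x\<in>{1..2*m}. \<forall>y\<in>{1..2*m}. x \<noteq> y \<longrightarrow> ({x, y} \<in> E \<longleftrightarrow> {\<pi> x, \<pi> y} \<in> EU)"
    using assms(2) unfolding induced_sub_def by blast
  define \<pi>' where "\<pi>' = restrict \<pi> {1..2*m}"
  have "\<pi>' \<in> {1..2*m} \<rightarrow>\<^sub>E {0..<L}" using p(2) by (auto simp: \<pi>'_def)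
  moreover have "E = pull (2*m) EU \<pi>'"
  proof
    show "E \<subseteq> pull (2*m) EU \<pi>'"
    proof
      fix e assume "e \<in> E"
      then obtain u v where uv: "e = {u,v}" "u \<in> {1..m}" "v \<in> {m+1..2*m}"
        using assms(1) bip_mem by blast
      hence "u \<in> {1..2*m}" "v \<in> {1..2*m}" "u \<noteq> v" by auto
      moreover hence "{\<pi> u, \<pi> v} \<in> EU" using p(3) \<open>e \<in> E\<close> uv(1) by blast
      ultimately show "e \<in> pull (2*m) EU \<pi>'" unfolding pull_def \<pi>'_def using uv(1) by auto
    qed
    show "pull (2*m) EU \<pi>' \<subseteq> E"
    proof
      fix e assume "e \<in> pull (2*m) EU \<pi>'"
      then obtain x y where xy: "e={x,y}" "x\<in>{1..2*m}" "y\<in>{1..2*m}" "x\<noteq>y" "{\<pi>' x, \<pi>' y}\<in>EU"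
        unfolding pull_def by blast
      hence "{\<pi> x, \<pi> y}\<in>EU" by (simp add: \<pi>'_def)
      thus "e \<in> E" using p(3) xy by blast
    qed
  qed
  ultimately show ?thesis by blast
qed

lemma card_I:
  "card {E. E \<subseteq> bip_edges (2*m) \<and> induced_sub (2*m) E {0..<L} EU} \<le> L^(2*m)"
proof -
  have "{E. E \<subseteq> bip_edges (2*m) \<and> induced_sub (2*m) E {0..<L} EU} \<subseteq> pull (2*m) EU ` ({1..2*m} \<rightarrow>\<^sub>E {0..<L})"
    using pull_eq by blast
  hence "card {E. E \<subseteq> bip_edges (2*m) \<and> induced_sub (2*m) E {0..<L} EU} \<le> card ({1..2*m} \<rightarrow>\<^sub>E {0..<L})"
    by (meson card_image_le card_mono finite_PiE finite_atLeastAtMost finite_atLeastLessThan finite_imageI le_trans)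
  also have "\<dots> = L^(2*m)" by (simp add: card_PiE)
  finally show ?thesis .
qed

definition pairs :: "nat \<Rightarrow> nat set set" where
"pairs L = {{x,y}|x y. x < L \<and> y < L}"

lemma card_pairs: "card (pairs L) \<le> L*L" "finite (pairs L)"
proof -
  have eq: "pairs L = (\<lambda>(x,y). {x,y}) ` ({0..<L}\<times>{0..<L})" unfolding pairs_def by (auto simp: image_iff) blast
  show "card (pairs L) \<le> L*L" unfolding eq
    by (metis card_atLeastLessThan card_cartesian_product card_image_le finite_SigmaI finite_atLeastLessThan minus_nat.diff_0)
  show "finite (pairs L)" unfolding eq by simp
qed

lemma normalize:
  assumes "simple_graph V EU" "card V \<le> L"
  shows "\<exists>EU'. EU' \<subseteq> pairs L \<and> (\<forall>n E. induced_sub n E V EU \<longrightarrow> induced_sub n E {0..<L} EU')"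
proof -
  have finV: "finite V" and EUs: "EU \<subseteq> {{x, y} |x y. x \<in> V \<and> y \<in> V \<and> x \<noteq> y}"
    using assms(1) unfolding simple_graph_def by auto
  obtain h where h: "bij_betw h {0..<card V} V" using ex_bij_betw_nat_finite finV by blast
  define \<sigma> where "\<sigma> = the_inv_into {0..<card V} h"
  have s: "bij_betw \<sigma> V {0..<card V}" unfolding \<sigma>_def using h by (rule bij_betw_the_inv_into)
  hence sinj: "inj_on \<sigma> V" and srange: "\<sigma> ` V = {0..<card V}" by (auto simp: bij_betw_def)
  define EU' where "EU' = image \<sigma> ` EU"
  have "EU' \<subseteq> pairs L"
  proof
    fix e assume "e \<in> EU'"
    then obtain x y where "x \<in> V" "y \<in> V" "e = {\<sigma> x, \<sigma> y}" using EUs unfolding EU'_def by auto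
    moreover hence "\<sigma> x < L" "\<sigma> y < L" using srange assms(2) by (auto dest!: equalityD1)
    ultimately show "e \<in> pairs L" unfolding pairs_def by blast
  qed
  moreover have "induced_sub n E {0..<L} EU'" if H: "induced_sub n E V EU" for n E
  proof -
    obtain \<pi> where p: "inj_on \<pi> {1..n}" "\<pi> ` {1..n} \<subseteq> V"
      "\<forall>x\<in>{1..n}. \<forall>y\<in>{1..n}. x \<noteq> y \<longrightarrow> ({x, y} \<in> E \<longleftrightarrow> {\<pi> x, \<pi> y} \<in> EU)"
      using H unfolding induced_sub_def by blast
    have "inj_on (\<sigma> \<circ> \<pi>) {1..n}" using p(1,2) sinj by (simp add: comp_inj_on inj_on_subset)
    moreover have "(\<sigma> \<circ> \<pi>) ` {1..n} \<subseteq> {0..<L}"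
    proof
      fix u assume "u \<in> (\<sigma> \<circ> \<pi>) ` {1..n}"
      then obtain x where "x \<in> {1..n}" "u = \<sigma> (\<pi> x)" by auto
      hence "u \<in> \<sigma> ` V" using p(2) by (metis image_eqI image_subset_iff)
      thus "u \<in> {0..<L}" using srange assms(2) by auto
    qed
    moreover have "{x, y} \<in> E \<longleftrightarrow> {(\<sigma> \<circ> \<pi>) x, (\<sigma> \<circ> \<pi>) y} \<in> EU'"
      if xy: "x \<in> {1..n}" "y \<in> {1..n}" "x \<noteq> y" for x y
    proof -
      have in1: "{\<pi> x, \<pi> y} \<subseteq> V" using p(2) xy by auto
      have "{\<pi> x, \<pi> y} \<in> EU \<longleftrightarrow> \<sigma> ` {\<pi> x, \<pi> y} \<in> EU'"
      proof
        assume "{\<pi> x, \<pi> y} \<in> EU" thus "\<sigma> ` {\<pi> x, \<pi> y} \<in> EU'" unfolding EU'_def by blast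
      next
        assume "\<sigma> ` {\<pi> x, \<pi> y} \<in> EU'"
        then obtain f where f: "f \<in> EU" "\<sigma> ` f = \<sigma> ` {\<pi> x, \<pi> y}" unfolding EU'_def by auto
        have "f \<subseteq> V" using f(1) EUs by auto
        hence "f = {\<pi> x, \<pi> y}" using f(2) in1 sinj inj_on_image_eq_iff[of \<sigma> V f "{\<pi> x, \<pi> y}"] by blast
        thus "{\<pi> x, \<pi> y} \<in> EU" using f(1) by simp
      qed
      thus ?thesis using p(3) xy by simp
    qed
    ultimately show ?thesis unfolding induced_sub_def by blast
  qed
  ultimately show ?thesis by blast
qed



lemma tuple_arg:
  fixes G :: "nat set set set" and L K m :: nat
  assumes finG: "finite G" and Gsub: "\<forall>E\<in>G. E \<subseteq> bip_edges (2*m)"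
    and big: "2 * L^(2*m) \<le> card G" and L: "L \<ge> 1" and K: "K = L*L+1"
  shows "\<exists>M \<subseteq> G. card M \<le> K \<and> \<not> (\<exists>V EU. simple_graph V EU \<and> card V \<le> L \<and> (\<forall>E\<in>M. induced_sub (2*m) E V EU))"
proof -
  define I where "I EU = {E\<in>G. induced_sub (2*m) E {0..<L} EU}" for EU
  define T where "T = {0..<K} \<rightarrow>\<^sub>E G"
  define Bad where "Bad = (\<Union>EU\<in>Pow (pairs L). {0..<K} \<rightarrow>\<^sub>E I EU)"
  have cI: "card (I EU) \<le> L^(2*m)" for EU
  proof -
    have "I EU \<subseteq> {E. E \<subseteq> bip_edges (2*m) \<and> induced_sub (2*m) E {0..<L} EU}"
      using Gsub unfolding I_def by auto
    moreover have "finite {E. E \<subseteq> bip_edges (2*m) \<and> induced_sub (2*m) E {0..<L} EU}"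
      by (rule finite_subset[of _ "Pow (bip_edges (2*m))"]) (auto simp: bip_finite)
    ultimately have "card (I EU) \<le> card {E. E \<subseteq> bip_edges (2*m) \<and> induced_sub (2*m) E {0..<L} EU}"
      by (intro card_mono)
    thus ?thesis using card_I[of m L EU] by linarith
  qed
  have finI: "finite (I EU)" for EU using finG unfolding I_def by simp
  have "card Bad \<le> (\<Sum>EU\<in>Pow (pairs L). card ({0..<K} \<rightarrow>\<^sub>E I EU))"
    unfolding Bad_def by (rule card_UN_le) (simp add: card_pairs)
  also have "\<dots> \<le> (\<Sum>EU\<in>Pow (pairs L). (L^(2*m))^K)"
    by (intro sum_mono) (simp add: card_PiE power_mono cI)
  also have "\<dots> = 2^(card (pairs L)) * (L^(2*m))^K" by (simp add: card_Pow card_pairs)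
  also have "\<dots> \<le> 2^(L*L) * (L^(2*m))^K"
    by (intro mult_right_mono power_increasing card_pairs) auto
  also have "\<dots> < 2^K * (L^(2*m))^K"
    using L K by (intro mult_strict_right_mono power_strict_increasing) auto
  also have "\<dots> = (2 * L^(2*m))^K" by (simp add: power_mult_distrib)
  also have "\<dots> \<le> card G ^ K" by (intro power_mono big) simp
  also have "\<dots> = card T" unfolding T_def by (simp add: card_PiE)
  finally have "card Bad < card T" .
  hence "\<not> T \<subseteq> Bad"
    by (metis card_mono not_le finite_UN_I finite_PiE finite_Pow_iff finite_atLeastLessThan finI card_pairs(2) Bad_def)
  then obtain t where t: "t \<in> T" "t \<notin> Bad" by blast
  define M where "M = t ` {0..<K}"
  have "M \<subseteq> G" using t(1) unfolding M_def T_def by auto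
  moreover have "card M \<le> K" unfolding M_def using card_image_le[of "{0..<K}" t] by simp
  moreover have "\<not> (\<exists>V EU. simple_graph V EU \<and> card V \<le> L \<and> (\<forall>E\<in>M. induced_sub (2*m) E V EU))"
  proof
    assume "\<exists>V EU. simple_graph V EU \<and> card V \<le> L \<and> (\<forall>E\<in>M. induced_sub (2*m) E V EU)"
    then obtain V EU where VE: "simple_graph V EU" "card V \<le> L" "\<forall>E\<in>M. induced_sub (2*m) E V EU" by blast
    obtain EU' where EU': "EU' \<subseteq> pairs L" "\<forall>n E. induced_sub n E V EU \<longrightarrow> induced_sub n E {0..<L} EU'"
      using normalize[OF VE(1,2)] by blast
    have "t \<in> {0..<K} \<rightarrow>\<^sub>E I EU'"
      using t(1) VE(3) EU'(2) unfolding T_def I_def M_def by (auto simp: PiE_iff)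
    hence "t \<in> Bad" unfolding Bad_def using EU'(1) by blast
    thus False using t(2) by simp
  qed
  ultimately show ?thesis by blast
qed




lemma ev_powr_ge:
  fixes p K :: real assumes "0 < p"
  shows "eventually (\<lambda>n::nat. K \<le> real n powr p) sequentially"
proof -
  define K' where "K' = max 1 K"
  have "K' \<le> real n powr p" if "n \<ge> nat \<lceil>K' powr (1/p)\<rceil>" for n
  proof -
    have "K' powr (1/p) \<le> real n" using that by linarith
    hence "(K' powr (1/p)) powr p \<le> real n powr p"
      by (intro powr_mono2) (use assms in auto)
    also have "(K' powr (1/p)) powr p = K'" using assms unfolding K'_def
      by (simp add: powr_powr)
    finally show ?thesis by simp
  qed
  hence "eventually (\<lambda>n::nat. K' \<le> real n powr p) sequentially"
    unfolding eventually_sequentially by blast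
  thus ?thesis by eventually_elim (auto simp: K'_def)
qed

lemma ev_powr_dom:
  fixes a b C D :: real assumes "b < a" "0 < a" "0 \<le> C"
  shows "eventually (\<lambda>n::nat. C * real n powr b + D \<le> real n powr a) sequentially"
proof -
  have e1: "eventually (\<lambda>n::nat. 2*C \<le> real n powr (a-b)) sequentially"
    by (rule ev_powr_ge) (use assms in auto)
  have e2: "eventually (\<lambda>n::nat. 2*D \<le> real n powr a) sequentially"
    by (rule ev_powr_ge) (use assms in auto)
  have e3: "eventually (\<lambda>n::nat. 1 \<le> n) sequentially"
    by (simp add: eventually_ge_at_top)
  show ?thesis using e1 e2 e3
  proof eventually_elim
    case (elim n)
    have "real n powr a = real n powr (a-b) * real n powr b"
      using elim by (simp add: powr_add[symmetric])
    also have "\<dots> \<ge> 2*C * real n powr b"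
      by (intro mult_right_mono) (use elim in auto)
    finally have "2*C * real n powr b \<le> real n powr a" .
    moreover have "0 \<le> C * real n powr b" using assms by simp
    ultimately show ?case using elim by linarith
  qed
qed


lemma nat_floor_le: "0 \<le> y \<Longrightarrow> real (nat \<lfloor>y\<rfloor>) \<le> y"
  by simp

lemma q_bound:
  fixes \<delta> :: real and m :: nat
  assumes d: "0 < \<delta>" and m: "m \<ge> 1"
  shows "(real (nat \<lfloor>real m powr (1/2)\<rfloor>) * real (nat \<lfloor>real m powr (2 - (1/2 + \<delta>/2))\<rfloor>) / real (m*m))^(nat \<lceil>8/\<delta>\<rceil>) \<le> 1 / real m^4"
proof -
  define x where "x = real m"
  have x: "x \<ge> 1" using m unfolding x_def by simp
  define q where "q = real (nat \<lfloor>real m powr (1/2)\<rfloor>) * real (nat \<lfloor>real m powr (2 - (1/2 + \<delta>/2))\<rfloor>) / real (m*m)"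
  have q0: "0 \<le> q" unfolding q_def by simp
  have "q \<le> x powr (1/2) * x powr (2 - (1/2 + \<delta>/2)) / (x*x)"
    unfolding q_def x_def of_nat_mult
    by (intro divide_right_mono mult_mono nat_floor_le) auto
  also have "\<dots> = x powr (-\<delta>/2)"
  proof -
    have e1: "x powr (1/2) * x powr (2 - (1/2 + \<delta>/2)) = x powr (2 - \<delta>/2)"
      by (simp add: powr_add[symmetric])
    have e2: "x * x = x powr 2" using powr_realpow[of x 2] x by (simp add: power2_eq_square)
    have e3: "x powr (2 - \<delta>/2) / x powr 2 = x powr (2 - \<delta>/2 - 2)" by (simp only: powr_diff)
    show ?thesis unfolding e1 e2 e3 by (rule arg_cong[where f="\<lambda>t. x powr t"]) simp
  qed
  finally have qle: "q \<le> x powr (-\<delta>/2)" .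
  define c' where "c' = nat \<lceil>8/\<delta>\<rceil>"
  have c': "real c' \<ge> 8/\<delta>" unfolding c'_def by linarith
  have "q^c' \<le> (x powr (-\<delta>/2))^c'" by (intro power_mono qle q0)
  also have "\<dots> = x powr (real c' * (-\<delta>/2))" using x by (simp add: powr_power)
  also have "\<dots> \<le> x powr (-4)"
  proof (rule powr_mono[OF _ x])
    have "real c' * \<delta> \<ge> 8" using c' d by (simp add: field_simps)
    thus "real c' * (- \<delta> / 2) \<le> - 4" by simp
  qed
  also have "\<dots> = 1 / x^4" using x by (simp add: powr_minus_divide powr_realpow[of x 4, simplified])
  finally show ?thesis unfolding q_def c'_def x_def .
qed

lemma nat_floor_ge: "0 \<le> y \<Longrightarrow> y - 1 \<le> real (nat \<lfloor>y\<rfloor>)"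
  by linarith

lemma main_fixed:
  fixes \<delta> :: real and n m :: nat
  assumes d: "0 < \<delta>" "\<delta> < 1" and n: "n = 2*m" and n32: "32 \<le> n"
    and E2: "4 * real n powr (3/2-\<delta>) + 12 \<le> real n powr (2 - (1/2+\<delta>/2))"
    and E3: "2 * real n powr (1/2-\<delta>) + 2 \<le> real n powr (1/2)"
  shows "\<exists>M. M \<subseteq> good_graphs (1/2 + \<delta>/2) (1/2) (8/\<delta>) n \<and>
         real (card M) \<le> real_of_int \<lceil>2 powr sqrt (real n)\<rceil> \<and>
         \<not> (\<exists>V EU. simple_graph V EU \<and>
               real (card V) \<le> 2 powr (real n powr (1/2 - \<delta>)) \<and>
               (\<forall>E\<in>M. induced_sub n E V EU))"
proof -
  define aa where "aa = 2 - (1/2+\<delta>/2)"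
  define bb where "bb = 3/2 - \<delta>"
  define t where "t = real n powr (1/2 - \<delta>)"
  define e where "e = nat \<lfloor>real m powr aa\<rfloor>"
  define Lr where "Lr = 2 powr t"
  define L where "L = nat \<lfloor>Lr\<rfloor>"
  define G where "G = good_graphs (1/2 + \<delta>/2) (1/2) (8/\<delta>) (2*m)"
  have m16: "m \<ge> 16" using n n32 by simp
  have rm: "real m = real n / 2" using n by simp
  have t0: "t \<ge> 0" unfolding t_def by simp
  have Lr1: "Lr \<ge> 1" unfolding Lr_def using t0 by (simp add: ge_one_powr_ge_zero)
  have L1: "L \<ge> 1" unfolding L_def using Lr1 by (simp add: le_nat_floor)
  have LLr: "real L \<le> Lr" unfolding L_def using Lr1 by simp
  have cG: "real (m*m choose e) / 2 \<le> real (card G)"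
    unfolding G_def e_def aa_def
    by (rule card_good_lower[OF m16]) (rule q_bound[OF d(1)], use m16 in simp)
  have mA: "real n powr aa / 4 \<le> real m powr aa"
  proof -
    have "2 powr aa \<le> 2 powr 2" by (rule powr_mono) (use d in \<open>auto simp: aa_def\<close>)
    hence le4: "2 powr aa \<le> 4" by simp
    have "real m powr aa = real n powr aa / 2 powr aa" unfolding rm by (simp add: powr_divide)
    moreover have "real n powr aa / 4 \<le> real n powr aa / 2 powr aa"
      by (rule divide_left_mono) (use le4 in auto)
    ultimately show ?thesis by simp
  qed
  have eLow: "real n powr bb + 2 \<le> real e"
  proof -
    have "real m powr aa - 1 \<le> real e" unfolding e_def by (rule nat_floor_ge) simp
    moreover have "4 * real n powr bb + 12 \<le> real n powr aa" using E2 unfolding aa_def bb_def .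
    ultimately show ?thesis using mA by linarith
  qed
  have e2: "e \<ge> 2"
  proof -
    have "0 \<le> real n powr bb" by simp
    hence "(2::real) \<le> real e" using eLow by linarith
    thus ?thesis by simp
  qed
  have eUp: "2 * e \<le> m*m"
  proof -
    have "real e \<le> real m powr aa" unfolding e_def by simp
    also have "\<dots> \<le> real m powr (3/2)" by (rule powr_mono) (use d m16 in \<open>auto simp: aa_def\<close>)
    finally have e1: "real e \<le> real m powr (3/2)" .
    have "real m powr (1/2) \<ge> 16 powr (1/2)" by (rule powr_mono2) (use m16 in auto)
    moreover have "(16::real) powr (1/2) = 4" by (simp add: powr_half_sqrt)
    ultimately have s2: "real m powr (1/2) \<ge> 2" by simp
    have "real m * real m = real m powr (3/2) * real m powr (1/2)"
      using m16 by (simp add: powr_add[symmetric] powr_realpow[of "real m" 2, simplified] power2_eq_square)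
    also have "\<dots> \<ge> real m powr (3/2) * 2" by (intro mult_left_mono s2) simp
    finally have "2 * real e \<le> real m * real m" using e1 by linarith
    thus ?thesis by (metis of_nat_le_iff of_nat_mult of_nat_numeral)
  qed
  have Cbig: "2^e \<le> real (m*m choose e)"
  proof -
    have "(2::real)^e \<le> (real (m*m) / real e)^e"
    proof (rule power_mono)
      show "2 \<le> real (m*m) / real e" using eUp e2
        by (simp add: field_simps) (metis of_nat_le_iff of_nat_mult of_nat_numeral mult.commute)
    qed simp
    also have "\<dots> \<le> real (m*m choose e)" by (rule binomial_ge_n_over_k_pow_k) (use eUp in simp)
    finally show ?thesis .
  qed
  have Lpow: "real L^n \<le> 2 powr (real n powr bb)"
  proof -
    have "real L^n \<le> Lr^n" by (intro power_mono LLr) simp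
    also have "\<dots> = 2 powr (real n * t)" unfolding Lr_def by (simp add: powr_power)
    also have "real n * t = real n powr bb"
    proof -
      have "real n > 0" using n32 by simp
      have "bb = 1 + (1/2 - \<delta>)" unfolding bb_def by simp
      hence "real n powr bb = real n powr 1 * real n powr (1/2 - \<delta>)"
        by (simp only: powr_add)
      thus ?thesis using \<open>real n > 0\<close> unfolding t_def by simp
    qed
    finally show ?thesis .
  qed
  have "2 * real L^n \<le> 2 * 2 powr (real e - 2)"
    using Lpow eLow by (smt (verit) powr_mono)
  also have "2 powr (real e - 2) = 2^e / 4"
    by (simp add: powr_diff powr_realpow)
  finally have "2 * real L^n \<le> 2 * (2^e / 4)" .
  hence "2 * real L^n \<le> real (card G)" using Cbig cG by linarith
  hence "real (2 * L^(2*m)) \<le> real (card G)" using n by simp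
  hence big: "2 * L^(2*m) \<le> card G" by (simp only: of_nat_le_iff)
  have finG: "finite G"
    by (rule finite_subset[of _ "Pow (bip_edges (2*m))"]) (auto simp: G_def good_graphs_def good_graph_def bip_finite)
  have Gsub: "\<forall>E\<in>G. E \<subseteq> bip_edges (2*m)" by (auto simp: G_def good_graphs_def good_graph_def)
  obtain M where M: "M \<subseteq> G" "card M \<le> L*L+1"
    "\<not> (\<exists>V EU. simple_graph V EU \<and> card V \<le> L \<and> (\<forall>E\<in>M. induced_sub (2*m) E V EU))"
    using tuple_arg[OF finG Gsub big L1 refl] by blast
  have cM: "real (card M) \<le> real_of_int \<lceil>2 powr sqrt (real n)\<rceil>"
  proof -
    have "real (card M) \<le> real L * real L + 1" using M(2) by (metis of_nat_le_iff of_nat_mult of_nat_Suc add.commute of_nat_1 of_nat_add)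
    also have "\<dots> \<le> Lr * Lr + 1" using LLr by (intro add_right_mono mult_mono) auto
    also have "Lr * Lr = 2 powr (2*t)" unfolding Lr_def by (simp flip: powr_add)
    also have "2 powr (2*t) + 1 \<le> 2 powr (2*t) + 2 powr (2*t)"
      using t0 by (simp add: ge_one_powr_ge_zero)
    also have "\<dots> = 2 powr (2*t + 1)" by (simp add: powr_add)
    also have "\<dots> \<le> 2 powr (real n powr (1/2))"
      by (rule powr_mono) (use E3 in \<open>auto simp: t_def\<close>)
    also have "\<dots> = 2 powr sqrt (real n)" by (simp add: powr_half_sqrt)
    also have "\<dots> \<le> real_of_int \<lceil>2 powr sqrt (real n)\<rceil>" by simp
    finally show ?thesis .
  qed
  show ?thesis
  proof (intro exI conjI)
    show "M \<subseteq> good_graphs (1/2 + \<delta>/2) (1/2) (8/\<delta>) n" using M(1) n G_def by simp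
    show "real (card M) \<le> real_of_int \<lceil>2 powr sqrt (real n)\<rceil>" by (rule cM)
    show "\<not> (\<exists>V EU. simple_graph V EU \<and> real (card V) \<le> 2 powr (real n powr (1/2 - \<delta>)) \<and>
               (\<forall>E\<in>M. induced_sub n E V EU))"
    proof
      assume "\<exists>V EU. simple_graph V EU \<and> real (card V) \<le> 2 powr (real n powr (1/2 - \<delta>)) \<and>
               (\<forall>E\<in>M. induced_sub n E V EU)"
      then obtain V EU where VE: "simple_graph V EU" "real (card V) \<le> Lr" "\<forall>E\<in>M. induced_sub n E V EU"
        unfolding Lr_def t_def by blast
      have "card V \<le> L" unfolding L_def using VE(2) by (simp add: le_nat_floor)
      thus False using M(3) VE(1,3) n by blast
    qed
  qed
qed


theorem mainTheorem5:
  fixes \<delta> :: real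
  assumes "0 < \<delta>" and "\<delta> < 1"
  shows "\<exists>N. \<forall>n\<ge>N. even n \<longrightarrow>
    (\<exists>M. M \<subseteq> good_graphs (1/2 + \<delta>/2) (1/2) (8/\<delta>) n \<and>
         real (card M) \<le> real_of_int \<lceil>2 powr sqrt (real n)\<rceil> \<and>
         \<not> (\<exists>V EU. simple_graph V EU \<and>
               real (card V) \<le> 2 powr (real n powr (1/2 - \<delta>)) \<and>
               (\<forall>E\<in>M. induced_sub n E V EU)))"
proof -
  have E1: "eventually (\<lambda>n::nat. 32 \<le> n) sequentially" by (simp add: eventually_ge_at_top)
  have E2: "eventually (\<lambda>n::nat. 4 * real n powr (3/2-\<delta>) + 12 \<le> real n powr (2 - (1/2+\<delta>/2))) sequentially"
    by (rule ev_powr_dom) (use assms in auto)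
  have E3: "eventually (\<lambda>n::nat. 2 * real n powr (1/2-\<delta>) + 2 \<le> real n powr (1/2)) sequentially"
    by (rule ev_powr_dom) (use assms in auto)
  obtain N where N: "\<And>n. n \<ge> N \<Longrightarrow> 32 \<le> n \<and> 4 * real n powr (3/2-\<delta>) + 12 \<le> real n powr (2 - (1/2+\<delta>/2))
      \<and> 2 * real n powr (1/2-\<delta>) + 2 \<le> real n powr (1/2)"
    using eventually_conj[OF E1 eventually_conj[OF E2 E3]] unfolding eventually_sequentially by blast
  show ?thesis
  proof (rule exI[of _ N], intro allI impI)
    fix n :: nat assume nN: "N \<le> n" and ev: "even n"
    then obtain m where nm: "n = 2*m" by (auto elim: evenE)
    show "\<exists>M. M \<subseteq> good_graphs (1/2 + \<delta>/2) (1/2) (8/\<delta>) n \<and>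
         real (card M) \<le> real_of_int \<lceil>2 powr sqrt (real n)\<rceil> \<and>
         \<not> (\<exists>V EU. simple_graph V EU \<and>
               real (card V) \<le> 2 powr (real n powr (1/2 - \<delta>)) \<and>
               (\<forall>E\<in>M. induced_sub n E V EU))"
      using main_fixed[OF assms nm] N[OF nN] by blast
  qed
qed

end
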